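(* There is an absolute constant $C>0$ such that for all real $k,s$ and all integers $N\ge0$, the function $g_{k,s}(x)=e^{-\frac12(x-s)^2+ikx}$ satisfies \[ \bigl\|g_{k,s}-\widehat{\Pi}_N g_{k,s}\bigr\|\le \frac{C}{\sqrt{(N+1)!}}\left(\frac{k^2+s^2}{2}\right)^{\frac{N+1}{2}}. \]
   Context: $\|\cdot\|$ is the $L^2(\mathbb{R})$ norm. $\widehat{P}_N=\{e^{-x^2/2}\psi(x):\ \psi\text{ a polynomial of degree}\le N\}$ and $\widehat{\Pi}_N$ is the $L^2(\mathbb{R})$-orthogonal projection onto $\widehat{P}_N$. *)

theory Defs
  imports "HOL-Analysis.Analysis" "HOL-Computational_Algebra.Polynomial"
begin

definition l2_inner :: "(real \<Rightarrow> complex) \<Rightarrow> (real \<Rightarrow> complex) \<Rightarrow> complex" where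
  "l2_inner f h = (LINT x|lborel. f x * cnj (h x))"

definition l2_norm :: "(real \<Rightarrow> complex) \<Rightarrow> real" where
  "l2_norm f = sqrt (LINT x|lborel. (cmod (f x))^2)"

definition hatP :: "nat \<Rightarrow> (real \<Rightarrow> complex) set" where
  "hatP N = {(\<lambda>x. complex_of_real (exp (- (x^2) / 2)) * poly \<psi> (complex_of_real x)) | \<psi>.
               degree \<psi> \<le> N}"

definition hatPi :: "nat \<Rightarrow> (real \<Rightarrow> complex) \<Rightarrow> (real \<Rightarrow> complex)" where
  "hatPi N g = (THE p. p \<in> hatP N \<and> (\<forall>q\<in>hatP N. l2_inner (\<lambda>x. g x - p x) q = 0))"

definition gks :: "real \<Rightarrow> real \<Rightarrow> real \<Rightarrow> complex" where
  "gks k s x = exp (complex_of_real (- ((x - s)^2) / 2) + \<i> * complex_of_real (k * x))"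

end

theory Submission imports Defs "HOL-Probability.Distributions" begin

definition mom :: "nat \<Rightarrow> real" where
  "mom i = (if even i then sqrt pi * fact i / (4 ^ (i div 2) * fact (i div 2)) else 0)"

lemma mom_int: "has_bochner_integral lborel (\<lambda>x. exp (- x\<^sup>2) * x ^ i) (mom i)"
proof -
  have nd: "normal_density 0 (1 / sqrt 2) x = exp (- x\<^sup>2) / sqrt pi" for x
    using real_sqrt_gt_zero[of pi] by (simp add: normal_density_def power_divide)
  show ?thesis
  proof (cases "even i")
    case True
    then obtain k where k: "i = 2 * k" by (auto elim: evenE)
    have "has_bochner_integral lborel (\<lambda>x. sqrt pi * (normal_density 0 (1 / sqrt 2) x * (x - 0) ^ (2 * k)))
       (sqrt pi * (fact (2 * k) / ((2 / (1 / sqrt 2)\<^sup>2)^k * fact k)))"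
      by (intro has_bochner_integral_mult_right normal_moment_even) auto
    moreover have "(2 / (1 / sqrt 2)\<^sup>2) = (4::real)" by (simp add: power_divide)
    ultimately show ?thesis using k True by (simp add: nd mom_def)
  next
    case False
    then obtain k where k: "i = 2 * k + 1" by (auto elim: oddE)
    have "has_bochner_integral lborel (\<lambda>x. sqrt pi * (normal_density 0 (1 / sqrt 2) x * (x - 0) ^ (2 * k + 1))) (sqrt pi * 0)"
      by (intro has_bochner_integral_mult_right normal_moment_odd) auto
    then show ?thesis using k False by (simp add: nd mom_def)
  qed
qed

lemma mom_rec: "real (Suc i) * mom i = 2 * mom (i + 2)"
proof (cases "even i")
  case True
  then obtain k where k: "i = 2 * k" by (auto elim: evenE)
  have a: "(2 * k + 2) div 2 = Suc k" by simp
  have f1: "fact (2 * k + 2) = (real (2*k+2)) * (2*k+1) * fact (2 * k)"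
    by (simp add: fact_Suc algebra_simps)
  have f2: "fact (Suc k) = real (Suc k) * fact k" by simp
  have "2 * mom (i + 2) = 2 * (sqrt pi * ((real (2*k+2)) * (2*k+1) * fact (2 * k)) / (4 * 4 ^ k * (real (Suc k) * fact k)))"
    using k by (simp add: mom_def a f1 f2)
  also have "\<dots> = (4 * real (Suc k)) * (sqrt pi * (2*k+1) * fact (2 * k)) / ((4 * real (Suc k)) * (4 ^ k * fact k))"
    by (simp add: algebra_simps)
  also have "\<dots> = sqrt pi * (2*k+1) * fact (2 * k) / (4 ^ k * fact k)"
    by (rule mult_divide_mult_cancel_left) simp
  also have "\<dots> = real (Suc i) * mom i"
    using k by (simp add: mom_def)
  finally show ?thesis by simp
next
  case False then show ?thesis by (simp add: mom_def)
qed

definition Lc :: "complex poly \<Rightarrow> complex" where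
  "Lc p = (\<Sum>i\<le>degree p. coeff p i * of_real (mom i))"

lemma Lc_le: "degree p \<le> n \<Longrightarrow> Lc p = (\<Sum>i\<le>n. coeff p i * of_real (mom i))"
  unfolding Lc_def
  by (rule sum.mono_neutral_left) (auto simp: coeff_eq_0)

lemma Lc_int: "has_bochner_integral lborel (\<lambda>x. complex_of_real (exp (- x\<^sup>2)) * poly p (of_real x)) (Lc p)"
proof -
  have eq: "complex_of_real (exp (- x\<^sup>2)) * poly p (of_real x) =
     (\<Sum>i\<le>degree p. coeff p i * of_real (exp (- x\<^sup>2) * x ^ i))" for x
    by (simp add: poly_altdef sum_distrib_left algebra_simps)
  have "has_bochner_integral lborel (\<lambda>x. \<Sum>i\<le>degree p. coeff p i * of_real (exp (- x\<^sup>2) * x ^ i)) (Lc p)"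
    unfolding Lc_def
    by (intro has_bochner_integral_sum has_bochner_integral_mult_right has_bochner_integral_of_real mom_int)
  then show ?thesis by (simp add: eq)
qed

lemma Lc_add: "Lc (p + q) = Lc p + Lc q"
proof -
  define n where "n = max (degree p) (degree q)"
  have "degree (p + q) \<le> n" "degree p \<le> n" "degree q \<le> n"
    by (auto simp: n_def degree_add_le)
  then show ?thesis by (simp add: Lc_le sum.distrib algebra_simps)
qed

lemma Lc_smult: "Lc (smult c p) = c * Lc p"
  by (simp add: Lc_le[of "smult c p" "degree p"] Lc_def sum_distrib_left mult.assoc)

lemma Lc_minus: "Lc (- p) = - Lc p"
  using Lc_smult[of "-1" p] by simp

lemma Lc_diff: "Lc (p - q) = Lc p - Lc q"
  using Lc_add[of p "-q"] Lc_minus[of q] by simp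

lemma Lc_monom: "Lc (monom c k) = c * of_real (mom k)"
proof -
  have "Lc (monom c k) = (\<Sum>i\<le>k. if i = k then c * of_real (mom i) else 0)"
  proof (rule trans[OF Lc_le[of "monom c k" k]])
    show "degree (monom c k) \<le> k" by (rule degree_monom_le)
    show "(\<Sum>i\<le>k. coeff (monom c k) i * complex_of_real (mom i)) = (\<Sum>i\<le>k. if i = k then c * complex_of_real (mom i) else 0)"
      by (rule sum.cong) (auto simp: coeff_monom)
  qed
  then show ?thesis by simp
qed

lemma Lc_pderiv: "Lc (pderiv p) = 2 * Lc (pCons 0 p)"
proof -
  define n where "n = degree p"
  have d1: "degree (pderiv p) \<le> n" by (simp add: n_def degree_pderiv)
  have d2: "degree (pCons 0 p) \<le> Suc n" by (simp add: n_def)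
  have "Lc (pderiv p) = (\<Sum>i\<le>n. of_nat (Suc i) * coeff p (Suc i) * of_real (mom i))"
    by (simp add: Lc_le[OF d1] coeff_pderiv)
  also have "\<dots> = (\<Sum>i\<le>n. 2 * coeff p (Suc i) * of_real (mom (i + 2)))"
  proof (rule sum.cong[OF refl])
    fix i
    have "complex_of_real (real (Suc i) * mom i) = of_real (2 * mom (i + 2))" by (simp only: mom_rec)
    then have "of_nat (Suc i) * complex_of_real (mom i) = 2 * of_real (mom (i + 2))" by simp
    then show "of_nat (Suc i) * coeff p (Suc i) * of_real (mom i) = 2 * coeff p (Suc i) * of_real (mom (i + 2))"
      by (metis mult.commute mult.left_commute)
  qed
  also have "\<dots> = 2 * (\<Sum>i\<le>Suc n. coeff p i * of_real (mom (Suc i)))"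
  proof -
    have m1: "mom (Suc 0) = 0" by (simp add: mom_def)
    have "(\<Sum>i\<le>Suc n. coeff p i * complex_of_real (mom (Suc i))) = coeff p 0 * complex_of_real (mom (Suc 0)) + (\<Sum>i\<le>n. coeff p (Suc i) * complex_of_real (mom (Suc (Suc i))))"
      by (rule sum.atMost_Suc_shift)
    then show ?thesis by (simp add: m1 sum_distrib_left mult.assoc numeral_2_eq_2)
  qed
  also have "\<dots> = 2 * Lc (pCons 0 p)"
  proof -
    have "Lc (pCons 0 p) = coeff (pCons 0 p) 0 * of_real (mom 0) + (\<Sum>i\<le>n. coeff (pCons 0 p) (Suc i) * of_real (mom (Suc i)))"
      unfolding Lc_le[OF d2] by (rule sum.atMost_Suc_shift)
    moreover have "coeff p (Suc n) = 0" by (simp add: n_def coeff_eq_0)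
    ultimately show ?thesis by simp
  qed
  finally show ?thesis .
qed


fun herm :: "nat \<Rightarrow> complex poly" where
  "herm 0 = 1"
| "herm (Suc n) = pCons 0 (smult 2 (herm n)) - pderiv (herm n)"

lemma herm_deg_coeff: "degree (herm n) = n \<and> coeff (herm n) n = 2 ^ n"
proof (induction n)
  case 0 then show ?case by simp
next
  case (Suc n)
  let ?h = "herm n"
  have dp: "degree (pderiv ?h) \<le> n" using Suc by (simp add: degree_pderiv)
  have d1: "degree (pCons 0 (smult 2 ?h)) \<le> Suc n" using Suc by simp
  have "coeff (pderiv ?h) (Suc n) = 0" using dp by (simp add: coeff_eq_0)
  then have c: "coeff (herm (Suc n)) (Suc n) = 2 ^ Suc n"
    using Suc by simp
  have "degree (herm (Suc n)) \<le> Suc n"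
    using degree_diff_le[OF d1 order.trans[OF dp]] by simp
  moreover have "Suc n \<le> degree (herm (Suc n))"
    by (rule le_degree, subst c, simp)
  ultimately have "degree (herm (Suc n)) = Suc n" by (rule antisym)
  with c show ?case by blast
qed

lemma degree_herm[simp]: "degree (herm n) = n" using herm_deg_coeff by blast
lemma coeff_herm_top[simp]: "coeff (herm n) n = 2 ^ n" using herm_deg_coeff by blast

lemma herm_real: "coeff (herm n) i \<in> \<real>"
proof (induction n arbitrary: i)
  case 0 then show ?case by (simp add: coeff_1)
next
  case (Suc n)
  have a: "coeff (pCons 0 (smult 2 (herm n))) i \<in> \<real>"
    using Suc by (cases i) auto
  have b: "coeff (pderiv (herm n)) i \<in> \<real>"
    using Suc by (simp add: coeff_pderiv)
  show ?case using a b by simp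
qed

lemma poly_herm_real: "cnj (poly (herm n) (complex_of_real x)) = poly (herm n) (complex_of_real x)"
  using poly_cnj_real[of "herm n" "complex_of_real x", OF herm_real] by simp

lemma pCons0_mult: "pCons 0 p * q = pCons 0 (p * q)"
  by (simp add: mult_pCons_left)

lemma Lc_herm_Suc: "Lc (herm (Suc n) * q) = Lc (herm n * pderiv q)"
proof -
  let ?h = "herm n"
  have "herm (Suc n) * q = smult 2 (pCons 0 (?h * q)) - pderiv ?h * q"
    by (simp add: algebra_simps pCons0_mult)
  then have "Lc (herm (Suc n) * q) = 2 * Lc (pCons 0 (?h * q)) - Lc (pderiv ?h * q)"
    by (simp only: Lc_diff Lc_smult)
  also have "2 * Lc (pCons 0 (?h * q)) = Lc (?h * pderiv q) + Lc (q * pderiv ?h)"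
    by (simp add: Lc_pderiv[symmetric] pderiv_mult Lc_add)
  finally show ?thesis by (simp add: mult.commute)
qed

lemma Lc_herm: "Lc (herm n * q) = Lc ((pderiv ^^ n) q)"
proof (induction n arbitrary: q)
  case 0 then show ?case by simp
next
  case (Suc n)
  show ?case by (simp only: Lc_herm_Suc Suc.IH funpow_Suc_right comp_def)
qed

lemma pderiv_iter_top: "degree q \<le> n \<Longrightarrow> (pderiv ^^ n) q = [: fact n * coeff q n :]"
proof (induction n arbitrary: q)
  case 0 then show ?case by (metis degree_0_id funpow_0 fact_0 le_zero_eq mult_1)
next
  case (Suc n)
  have "degree (pderiv q) \<le> n" using Suc.prems by (simp add: degree_pderiv)
  then have "(pderiv ^^ Suc n) q = [: fact n * coeff (pderiv q) n :]"
    by (simp add: Suc.IH funpow_Suc_right del: funpow.simps)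
  then show ?case by (simp add: coeff_pderiv algebra_simps)
qed

lemma Lc_const: "Lc [: c :] = c * of_real (sqrt pi)"
  by (simp add: Lc_def mom_def)

lemma Lc_herm_le: "degree q \<le> n \<Longrightarrow> Lc (herm n * q) = fact n * coeff q n * of_real (sqrt pi)"
  by (simp add: Lc_herm pderiv_iter_top Lc_const)

lemma Lc_herm_herm: "Lc (herm n * herm m) = (if n = m then 2 ^ n * fact n * of_real (sqrt pi) else 0)"
proof -
  consider "m < n" | "m = n" | "n < m" by linarith
  then show ?thesis
  proof cases
    case 1 then show ?thesis by (simp add: Lc_herm_le coeff_eq_0)
  next
    case 2 then show ?thesis by (simp add: Lc_herm_le)
  next
    case 3 then show ?thesis by (subst mult.commute) (simp add: Lc_herm_le coeff_eq_0)
  qed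
qed

lemma pderiv_iter_monom: "(pderiv ^^ n) (monom a j) = monom (a * of_nat (\<Prod>i<n. j - i)) (j - n)"
proof (induction n arbitrary: a j)
  case 0 then show ?case by simp
next
  case (Suc n)
  have "(pderiv ^^ Suc n) (monom a j) = (pderiv ^^ n) (monom (of_nat j * a) (j - 1))"
    by (simp add: funpow_Suc_right pderiv_monom del: funpow.simps)
  also have "\<dots> = monom (of_nat j * a * of_nat (\<Prod>i<n. j - 1 - i)) (j - 1 - n)"
    by (rule Suc.IH)
  finally have e: "(pderiv ^^ Suc n) (monom a j) = monom (of_nat j * a * of_nat (\<Prod>i<n. j - 1 - i)) (j - 1 - n)" .
  have "(\<Prod>i<Suc n. j - i) = j * (\<Prod>i<n. j - 1 - i)"
    by (simp add: prod.lessThan_Suc_shift del: prod.lessThan_Suc)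
  then show ?case using e by (simp add: algebra_simps)
qed

lemma prod_shift_fact_nat: "(\<Prod>l<n. i + n - l) * fact i = (fact (i + n) :: nat)"
proof (induction n)
  case 0 then show ?case by simp
next
  case (Suc n)
  have "(\<Prod>l<Suc n. i + Suc n - l) = (i + Suc n) * (\<Prod>l<n. i + n - l)"
    by (simp add: prod.lessThan_Suc_shift del: prod.lessThan_Suc)
  then show ?case using Suc by (simp add: algebra_simps)
qed

lemma prod_shift_fact: "real (\<Prod>l<n. i + n - l) * fact i = fact (i + n)"
  by (metis of_nat_fact of_nat_mult prod_shift_fact_nat)

lemma prod_zero_lt: "(j::nat) < n \<Longrightarrow> (\<Prod>i<n. j - i) = 0"
proof -
  assume "j < n"
  then have "\<exists>a\<in>{..<n}. j - a = 0" by (intro bexI[of _ j]) auto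
  then show ?thesis by (intro prod_zero) auto
qed


definition Fk :: "complex \<Rightarrow> complex poly \<Rightarrow> real \<Rightarrow> complex" where
  "Fk u p x = complex_of_real (exp (- x\<^sup>2)) * exp (u * complex_of_real x) * poly p (complex_of_real x)"

lemma meas_cont: "continuous_on UNIV f \<Longrightarrow> (f :: real \<Rightarrow> complex) \<in> borel_measurable lborel"
  by (simp add: borel_measurable_continuous_onI)

lemma Fk_meas: "Fk u p \<in> borel_measurable lborel"
  unfolding Fk_def[abs_def] by (intro meas_cont continuous_intros)

lemma norm_poly_le: "norm (poly p (complex_of_real x)) \<le> (\<Sum>i\<le>degree p. norm (coeff p i) * \<bar>x\<bar> ^ i)"
proof -
  have "norm (poly p (complex_of_real x)) = norm (\<Sum>i\<le>degree p. coeff p i * complex_of_real x ^ i)"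
    by (simp add: poly_altdef)
  also have "\<dots> \<le> (\<Sum>i\<le>degree p. norm (coeff p i * complex_of_real x ^ i))"
    by (rule norm_sum)
  also have "\<dots> = (\<Sum>i\<le>degree p. norm (coeff p i) * \<bar>x\<bar> ^ i)"
    by (simp add: norm_mult norm_power)
  finally show ?thesis .
qed

lemma integrable_gauss_half_poly: "integrable lborel (\<lambda>x. exp (- x\<^sup>2 / 2) * (\<Sum>i\<le>n. c i * \<bar>x\<bar> ^ i) :: real)"
proof -
  have "integrable lborel (\<lambda>x. \<Sum>i\<le>n. (sqrt (2 * pi) * c i) * (std_normal_density x * \<bar>x\<bar> ^ i))"
    by (intro Bochner_Integration.integrable_sum Bochner_Integration.integrable_mult_right integrable_std_normal_moment_abs)
  moreover have "(\<Sum>i\<le>n. (sqrt (2 * pi) * c i) * (std_normal_density x * \<bar>x\<bar> ^ i)) = exp (- x\<^sup>2 / 2) * (\<Sum>i\<le>n. c i * \<bar>x\<bar> ^ i)" for x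
    by (simp add: std_normal_density_def sum_distrib_left sum_distrib_right algebra_simps)
  ultimately show ?thesis by simp
qed

lemma Fk_bound: "norm (Fk u p x) \<le> exp ((norm u)\<^sup>2 / 2) * (exp (- x\<^sup>2 / 2) * (\<Sum>i\<le>degree p. norm (coeff p i) * \<bar>x\<bar> ^ i))"
proof -
  have e1: "norm (exp (u * complex_of_real x)) \<le> exp (norm u * \<bar>x\<bar>)"
  proof -
    have "Re (u * complex_of_real x) \<le> norm u * \<bar>x\<bar>"
      using complex_Re_le_cmod[of "u * complex_of_real x"] by (simp add: norm_mult)
    then show ?thesis by simp
  qed
  have e2: "exp (- x\<^sup>2) * exp (norm u * \<bar>x\<bar>) \<le> exp ((norm u)\<^sup>2 / 2) * exp (- x\<^sup>2 / 2)"
  proof -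
    have "0 \<le> (\<bar>x\<bar> - norm u)\<^sup>2 / 2" by simp
    then have "- x\<^sup>2 + norm u * \<bar>x\<bar> \<le> (norm u)\<^sup>2 / 2 + (- x\<^sup>2 / 2)"
      by (simp add: power2_eq_square algebra_simps)
    then show ?thesis by (simp flip: exp_add)
  qed
  have "norm (Fk u p x) = exp (- x\<^sup>2) * norm (exp (u * complex_of_real x)) * norm (poly p (complex_of_real x))"
    by (simp add: Fk_def norm_mult)
  also have "\<dots> \<le> exp (- x\<^sup>2) * exp (norm u * \<bar>x\<bar>) * (\<Sum>i\<le>degree p. norm (coeff p i) * \<bar>x\<bar> ^ i)"
    by (intro mult_mono e1 norm_poly_le mult_left_mono) auto
  also have "\<dots> \<le> exp ((norm u)\<^sup>2 / 2) * exp (- x\<^sup>2 / 2) * (\<Sum>i\<le>degree p. norm (coeff p i) * \<bar>x\<bar> ^ i)"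
    by (intro mult_right_mono e2) (auto intro: sum_nonneg)
  finally show ?thesis by (simp add: mult.assoc)
qed

lemma Fk_integrable: "integrable lborel (Fk u p)"
proof (rule Bochner_Integration.integrable_bound[OF _ Fk_meas])
  show "integrable lborel (\<lambda>x. exp ((norm u)\<^sup>2 / 2) * (exp (- x\<^sup>2 / 2) * (\<Sum>i\<le>degree p. norm (coeff p i) * \<bar>x\<bar> ^ i)))"
    by (intro Bochner_Integration.integrable_mult_right integrable_gauss_half_poly)
  show "AE x in lborel. norm (Fk u p x) \<le> norm (exp ((norm u)\<^sup>2 / 2) * (exp (- x\<^sup>2 / 2) * (\<Sum>i\<le>degree p. norm (coeff p i) * \<bar>x\<bar> ^ i)))"
    using Fk_bound[of u p] by (intro AE_I2) (auto intro: order.trans[OF _ abs_ge_self])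
qed


lemma ser_mom: "(\<lambda>i. u ^ i * complex_of_real (mom i / fact i)) sums (of_real (sqrt pi) * exp (u\<^sup>2 / 4))"
proof -
  let ?f = "\<lambda>i. u ^ i * complex_of_real (mom i / fact i)"
  have sm: "strict_mono (\<lambda>k::nat. 2 * k)" by (rule strict_monoI) simp
  have z: "?f n = 0" if "n \<notin> range (\<lambda>k::nat. 2 * k)" for n
  proof -
    have "odd n" using that by (auto elim: evenE)
    then show ?thesis by (simp add: mom_def)
  qed
  have e: "?f (2 * k) = of_real (sqrt pi) * ((u\<^sup>2 / 4) ^ k /\<^sub>R fact k)" for k
  proof -
    have "mom (2 * k) / fact (2 * k) = sqrt pi / (4 ^ k * fact k)"
      by (simp add: mom_def)
    then have "?f (2 * k) = u ^ (2 * k) * of_real (sqrt pi / (4 ^ k * fact k))" by simp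
    also have "\<dots> = of_real (sqrt pi) * ((u\<^sup>2 / 4) ^ k /\<^sub>R fact k)"
    proof -
      have pw: "u ^ (2 * k) = (u\<^sup>2) ^ k" by (rule power_mult)
      have pw2: "u ^ (k * 2) = (u\<^sup>2) ^ k" by (metis pw mult.commute)
      show ?thesis by (simp add: pw pw2 power_divide scaleR_conv_of_real field_simps)
    qed
    finally show ?thesis .
  qed
  have "(\<lambda>k. ?f (2 * k)) sums (of_real (sqrt pi) * exp (u\<^sup>2 / 4))"
    unfolding e by (intro sums_mult exp_converges)
  then show ?thesis using sums_mono_reindex[OF sm, of ?f] z by blast
qed

lemma Lc_monom_herm: "Lc (monom 1 j * herm n) = of_real (real (\<Prod>i<n. j - i) * mom (j - n))"
proof -
  have "Lc (monom 1 j * herm n) = Lc (monom (of_nat (\<Prod>i<n. j - i)) (j - n))"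
    by (simp add: mult.commute[of "monom 1 j"] Lc_herm pderiv_iter_monom)
  then show ?thesis by (simp add: Lc_monom)
qed

lemma ser_t: "(\<lambda>j. u ^ j * complex_of_real (real (\<Prod>i<n. j - i) * mom (j - n) / fact j))
   sums (of_real (sqrt pi) * u ^ n * exp (u\<^sup>2 / 4))"
proof -
  let ?t = "\<lambda>j. u ^ j * complex_of_real (real (\<Prod>i<n. j - i) * mom (j - n) / fact j)"
  have z: "?t i = 0" if "i < n" for i using prod_zero_lt[OF that] by simp
  have e: "?t (i + n) = u ^ n * (u ^ i * complex_of_real (mom i / fact i))" for i
  proof -
    define P where "P = real (\<Prod>l<n. i + n - l)"
    have h: "P * fact i = fact (i + n)" unfolding P_def by (rule prod_shift_fact)
    have "P \<noteq> 0" using h by (metis fact_nonzero mult_eq_0_iff)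
    then have "P * mom i / fact (i + n) = mom i / fact i"
      unfolding h[symmetric] by (simp add: field_simps)
    moreover have "?t (i + n) = u ^ (i + n) * complex_of_real (P * mom i / fact (i + n))"
      by (simp add: P_def)
    ultimately show ?thesis by (simp add: power_add algebra_simps)
  qed
  have "(\<lambda>i. ?t (i + n)) sums (u ^ n * (of_real (sqrt pi) * exp (u\<^sup>2 / 4)))"
    unfolding e by (intro sums_mult ser_mom)
  then have "?t sums (u ^ n * (of_real (sqrt pi) * exp (u\<^sup>2 / 4)))"
    using sums_zero_iff_shift[of n ?t] z by blast
  then show ?thesis by (simp add: algebra_simps)
qed

lemma exp_partial_le: "0 \<le> r \<Longrightarrow> (\<Sum>j<M. r ^ j / fact j) \<le> exp (r::real)"
proof -
  assume r: "0 \<le> r"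
  have "(\<Sum>j<M. r ^ j /\<^sub>R fact j) \<le> (\<Sum>j. r ^ j /\<^sub>R fact j)"
  proof (rule sum_le_suminf)
    show "summable (\<lambda>j. r ^ j /\<^sub>R fact j)" by (rule summable_exp_generic)
  qed (use r in auto)
  then show ?thesis by (simp add: exp_def divide_inverse_commute)
qed

lemma Fk_herm: "has_bochner_integral lborel (Fk u (herm n)) (of_real (sqrt pi) * u ^ n * exp (u\<^sup>2 / 4))"
proof -
  let ?h = "herm n"
  define S where "S M x = (\<Sum>j<M. (u ^ j * of_real (1 / fact j)) * (complex_of_real (exp (- x\<^sup>2)) * poly (monom 1 j * ?h) (complex_of_real x)))" for M x
  define w where "w x = norm (Fk (of_real (norm u)) ?h x) + norm (Fk (- of_real (norm u)) ?h x)" for x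
  have S_alt: "S M x = complex_of_real (exp (- x\<^sup>2)) * (\<Sum>j<M. (u * complex_of_real x) ^ j /\<^sub>R fact j) * poly ?h (complex_of_real x)" for M x
    unfolding S_def by (simp add: sum_distrib_left sum_distrib_right poly_monom scaleR_conv_of_real power_mult_distrib divide_inverse algebra_simps)
  have lim: "(\<lambda>M. S M x) \<longlonglongrightarrow> Fk u ?h x" for x
    unfolding S_alt Fk_def
    by (intro tendsto_mult tendsto_const exp_converges[unfolded sums_def])
  have bound: "norm (S M x) \<le> w x" for M x
  proof -
    let ?a = "norm u"
    have "norm (\<Sum>j<M. (u * complex_of_real x) ^ j /\<^sub>R fact j) \<le> (\<Sum>j<M. norm ((u * complex_of_real x) ^ j /\<^sub>R fact j))"
      by (rule norm_sum)
    also have "\<dots> = (\<Sum>j<M. (?a * \<bar>x\<bar>) ^ j / fact j)"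
      by (simp add: norm_mult norm_power divide_inverse_commute)
    also have "\<dots> \<le> exp (?a * \<bar>x\<bar>)" by (rule exp_partial_le) simp
    also have "\<dots> \<le> exp (?a * x) + exp (- ?a * x)"
      by (cases "x \<ge> 0") (auto simp: add_increasing add_increasing2)
    finally have b1: "norm (\<Sum>j<M. (u * complex_of_real x) ^ j /\<^sub>R fact j) \<le> exp (?a * x) + exp (- ?a * x)" .
    have "norm (S M x) = exp (- x\<^sup>2) * norm (\<Sum>j<M. (u * complex_of_real x) ^ j /\<^sub>R fact j) * norm (poly ?h (complex_of_real x))"
      by (simp add: S_alt norm_mult)
    also have "\<dots> \<le> exp (- x\<^sup>2) * (exp (?a * x) + exp (- ?a * x)) * norm (poly ?h (complex_of_real x))"
      by (intro mult_right_mono mult_left_mono b1) auto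
    also have "\<dots> = w x"
      by (simp add: w_def Fk_def norm_mult algebra_simps)
    finally show ?thesis .
  qed
  have wint: "integrable lborel w"
    unfolding w_def by (intro Bochner_Integration.integrable_add integrable_norm Fk_integrable)
  have Smeas: "S M \<in> borel_measurable lborel" for M
    unfolding S_def by (intro meas_cont continuous_intros)
  have conv: "(\<lambda>M. integral\<^sup>L lborel (S M)) \<longlonglongrightarrow> integral\<^sup>L lborel (Fk u ?h)"
    by (rule integral_dominated_convergence[OF Fk_meas Smeas wint]) (auto intro: lim bound)
  have intS: "integral\<^sup>L lborel (S M) = (\<Sum>j<M. u ^ j * complex_of_real (real (\<Prod>i<n. j - i) * mom (j - n) / fact j))" for M
  proof -
    have "has_bochner_integral lborel (S M) (\<Sum>j<M. (u ^ j * of_real (1 / fact j)) * Lc (monom 1 j * ?h))"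
      unfolding S_def[abs_def]
      by (intro has_bochner_integral_sum has_bochner_integral_mult_right Lc_int)
    then show ?thesis by (simp add: has_bochner_integral_integral_eq Lc_monom_herm)
  qed
  have "(\<lambda>M. integral\<^sup>L lborel (S M)) \<longlonglongrightarrow> of_real (sqrt pi) * u ^ n * exp (u\<^sup>2 / 4)"
    unfolding intS using ser_t[of u n] by (simp add: sums_def)
  then have "integral\<^sup>L lborel (Fk u ?h) = of_real (sqrt pi) * u ^ n * exp (u\<^sup>2 / 4)"
    using conv LIMSEQ_unique by blast
  then show ?thesis using Fk_integrable has_bochner_integral_iff by blast
qed


definition phi :: "complex poly \<Rightarrow> real \<Rightarrow> complex" where
  "phi p x = complex_of_real (exp (- (x^2) / 2)) * poly p (complex_of_real x)"

lemma cnj_phi_herm: "cnj (phi (herm m) x) = phi (herm m) x"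
  by (simp add: phi_def poly_herm_real)

lemma phi_mult: "phi p x * phi q x = complex_of_real (exp (- x\<^sup>2)) * poly (p * q) (complex_of_real x)"
proof -
  have "exp (- (x^2) / 2) * exp (- (x^2) / 2) = exp (- x\<^sup>2)"
    by (simp flip: exp_add)
  then have "complex_of_real (exp (- (x^2) / 2)) * complex_of_real (exp (- (x^2) / 2)) = complex_of_real (exp (- x\<^sup>2))"
    by (metis of_real_mult)
  then show ?thesis by (simp add: phi_def algebra_simps)
qed

lemma inner_phi_herm:
  "has_bochner_integral lborel (\<lambda>x. phi p x * cnj (phi (herm m) x)) (Lc (p * herm m))"
  unfolding cnj_phi_herm phi_mult by (rule Lc_int)

lemma integrable_phi_herm: "integrable lborel (\<lambda>x. phi p x * cnj (phi (herm m) x))"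
  using inner_phi_herm[of p m] has_bochner_integral_iff by blast

lemma l2_inner_phi_herm: "l2_inner (phi p) (phi (herm m)) = Lc (p * herm m)"
  unfolding l2_inner_def using inner_phi_herm by (rule has_bochner_integral_integral_eq)

lemma gks_phi: "gks k s x * cnj (phi (herm m) x) =
   complex_of_real (exp (- s\<^sup>2 / 2)) * Fk (complex_of_real s + \<i> * complex_of_real k) (herm m) x"
proof -
  have e: "exp (complex_of_real (- ((x - s)^2) / 2) + \<i> * complex_of_real (k * x)) * complex_of_real (exp (- (x^2) / 2))
     = complex_of_real (exp (- s\<^sup>2 / 2)) * complex_of_real (exp (- x\<^sup>2)) * exp ((complex_of_real s + \<i> * complex_of_real k) * complex_of_real x)"
  proof -
    have "exp (complex_of_real (- ((x - s)^2) / 2) + \<i> * complex_of_real (k * x)) * complex_of_real (exp (- (x^2) / 2))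
       = exp (complex_of_real (- ((x - s)^2) / 2) + \<i> * complex_of_real (k * x) + complex_of_real (- (x^2) / 2))"
      by (simp only: exp_add exp_of_real)
    also have "complex_of_real (- ((x - s)^2) / 2) + \<i> * complex_of_real (k * x) + complex_of_real (- (x^2) / 2)
       = complex_of_real (- s\<^sup>2 / 2) + complex_of_real (- x\<^sup>2) + (complex_of_real s + \<i> * complex_of_real k) * complex_of_real x"
      by (simp add: complex_eq_iff power2_eq_square field_simps)
    also have "exp \<dots> = complex_of_real (exp (- s\<^sup>2 / 2)) * complex_of_real (exp (- x\<^sup>2)) * exp ((complex_of_real s + \<i> * complex_of_real k) * complex_of_real x)"
      by (simp only: exp_add exp_of_real)
    finally show ?thesis .
  qed
  show ?thesis
    unfolding cnj_phi_herm unfolding gks_def phi_def Fk_def by (simp only: mult.assoc[symmetric] e)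
qed

lemma inner_gks_herm:
  "has_bochner_integral lborel (\<lambda>x. gks k s x * cnj (phi (herm m) x))
     (complex_of_real (exp (- s\<^sup>2 / 2)) * (of_real (sqrt pi) * (complex_of_real s + \<i> * complex_of_real k) ^ m * exp ((complex_of_real s + \<i> * complex_of_real k)\<^sup>2 / 4)))"
  unfolding gks_phi by (intro has_bochner_integral_mult_right Fk_herm)

lemma gks_gks: "gks k s x * cnj (gks k s x) = complex_of_real (exp (- s\<^sup>2)) * Fk (2 * complex_of_real s) (herm 0) x"
proof -
  have "gks k s x * cnj (gks k s x) = complex_of_real ((cmod (gks k s x))\<^sup>2)"
    by (rule complex_norm_square[symmetric])
  also have "(cmod (gks k s x))\<^sup>2 = exp (- ((x - s)^2))"
    by (simp add: gks_def power2_eq_square flip: exp_add)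
  also have "exp (- ((x - s)^2)) = exp (- s\<^sup>2) * (exp (- x\<^sup>2) * exp (2 * s * x))"
    by (simp add: power2_eq_square algebra_simps flip: exp_add)
  finally show ?thesis
    by (simp add: Fk_def exp_of_real[symmetric] mult.assoc)
qed

lemma inner_gks_gks: "has_bochner_integral lborel (\<lambda>x. gks k s x * cnj (gks k s x)) (of_real (sqrt pi))"
proof -
  have H: "has_bochner_integral lborel (\<lambda>x. complex_of_real (exp (- s\<^sup>2)) * Fk (2 * complex_of_real s) (herm 0) x)
     (complex_of_real (exp (- s\<^sup>2)) * (of_real (sqrt pi) * (2 * complex_of_real s) ^ 0 * exp ((2 * complex_of_real s)\<^sup>2 / 4)))"
    by (intro has_bochner_integral_mult_right Fk_herm)
  have V: "complex_of_real (exp (- s\<^sup>2)) * (of_real (sqrt pi) * (2 * complex_of_real s) ^ 0 * exp ((2 * complex_of_real s)\<^sup>2 / 4)) = of_real (sqrt pi)"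
  proof -
    have "(2 * complex_of_real s)\<^sup>2 / 4 = complex_of_real (s\<^sup>2)" by (simp add: power2_eq_square)
    then have "exp ((2 * complex_of_real s)\<^sup>2 / 4) = complex_of_real (exp (s\<^sup>2))" by (metis exp_of_real)
    moreover have "exp (- s\<^sup>2) * exp (s\<^sup>2) = 1" by (simp flip: exp_add)
    ultimately show ?thesis by (simp flip: of_real_mult)
  qed
  show ?thesis unfolding gks_gks using H unfolding V .
qed


lemma Lc_zero[simp]: "Lc 0 = 0" by (simp add: Lc_def)

lemma Lc_sum: "Lc (\<Sum>i\<in>A. f i) = (\<Sum>i\<in>A. Lc (f i))"
  by (induction A rule: infinite_finite_induct) (simp_all add: Lc_add)

lemma degree_le_pred: "degree (p::complex poly) \<le> Suc N \<Longrightarrow> coeff p (Suc N) = 0 \<Longrightarrow> degree p \<le> N"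
  by (metis le_SucE leading_coeff_0_iff degree_0 le0)

lemma herm_span: "degree \<psi> \<le> N \<Longrightarrow> \<exists>d. \<psi> = (\<Sum>m\<le>N. smult (d m) (herm m))"
proof (induction N arbitrary: \<psi>)
  case 0
  then have "\<psi> = smult (coeff \<psi> 0) (herm 0)"
    by (simp add: degree_0_id)
  then show ?case by (intro exI[of _ "\<lambda>_. coeff \<psi> 0"]) simp
next
  case (Suc N)
  define c where "c = coeff \<psi> (Suc N) / 2 ^ Suc N"
  define \<psi>' where "\<psi>' = \<psi> - smult c (herm (Suc N))"
  have "degree (smult c (herm (Suc N))) \<le> Suc N" by (metis degree_herm degree_smult_le)
  then have d1: "degree \<psi>' \<le> Suc N" unfolding \<psi>'_def using Suc.prems degree_diff_le by blast
  have "coeff \<psi>' (Suc N) = 0" unfolding \<psi>'_def c_def coeff_diff coeff_smult coeff_herm_top by simp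
  with d1 have "degree \<psi>' \<le> N" by (rule degree_le_pred)
  then obtain d where d: "\<psi>' = (\<Sum>m\<le>N. smult (d m) (herm m))" using Suc.IH by blast
  define d' where "d' m = (if m = Suc N then c else d m)" for m
  have "(\<Sum>m\<le>Suc N. smult (d' m) (herm m)) = (\<Sum>m\<le>N. smult (d m) (herm m)) + smult c (herm (Suc N))"
    by (simp add: d'_def)
  also have "\<dots> = \<psi>" using d unfolding \<psi>'_def by (metis diff_add_cancel)
  finally show ?case by (intro exI[of _ d']) simp
qed

lemma Lc_span_herm: "m \<le> N \<Longrightarrow> Lc ((\<Sum>n\<le>N. smult (d n) (herm n)) * herm m) = d m * (2 ^ m * fact m * of_real (sqrt pi))"
proof -
  assume m: "m \<le> N"
  have "Lc ((\<Sum>n\<le>N. smult (d n) (herm n)) * herm m) = (\<Sum>n\<le>N. d n * Lc (herm n * herm m))"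
    by (simp add: sum_distrib_right Lc_sum Lc_smult)
  also have "\<dots> = (\<Sum>n\<le>N. if n = m then d m * (2 ^ m * fact m * of_real (sqrt pi)) else 0)"
    by (rule sum.cong) (auto simp: Lc_herm_herm)
  also have "\<dots> = d m * (2 ^ m * fact m * of_real (sqrt pi))" using m by simp
  finally show ?thesis .
qed

lemma phi_sum: "phi (\<Sum>n\<in>A. smult (d n) (herm n)) x = (\<Sum>n\<in>A. d n * phi (herm n) x)"
  by (simp add: phi_def poly_sum sum_distrib_left sum_distrib_right algebra_simps)

lemma int_sum_right:
  assumes "finite A" "\<And>i. i \<in> A \<Longrightarrow> integrable lborel (\<lambda>x. f x * cnj (h i x))"
  shows "integrable lborel (\<lambda>x. f x * cnj (\<Sum>i\<in>A. d i * h i x))"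
    and "l2_inner f (\<lambda>x. \<Sum>i\<in>A. d i * h i x) = (\<Sum>i\<in>A. cnj (d i) * l2_inner f (h i))"
proof -
  have eq: "f x * cnj (\<Sum>i\<in>A. d i * h i x) = (\<Sum>i\<in>A. cnj (d i) * (f x * cnj (h i x)))" for x
    by (simp add: sum_distrib_left algebra_simps)
  show "integrable lborel (\<lambda>x. f x * cnj (\<Sum>i\<in>A. d i * h i x))"
    unfolding eq using assms(2) by (intro Bochner_Integration.integrable_sum Bochner_Integration.integrable_mult_right) auto
  show "l2_inner f (\<lambda>x. \<Sum>i\<in>A. d i * h i x) = (\<Sum>i\<in>A. cnj (d i) * l2_inner f (h i))"
    unfolding l2_inner_def eq using assms(2)
    by (subst Bochner_Integration.integral_sum) (auto intro: Bochner_Integration.integrable_mult_right)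
qed

lemma int_sum_left:
  assumes "finite A" "\<And>i. i \<in> A \<Longrightarrow> integrable lborel (\<lambda>x. h i x * cnj (f x))"
  shows "integrable lborel (\<lambda>x. (\<Sum>i\<in>A. d i * h i x) * cnj (f x))"
    and "l2_inner (\<lambda>x. \<Sum>i\<in>A. d i * h i x) f = (\<Sum>i\<in>A. d i * l2_inner (h i) f)"
proof -
  have eq: "(\<Sum>i\<in>A. d i * h i x) * cnj (f x) = (\<Sum>i\<in>A. d i * (h i x * cnj (f x)))" for x
    by (simp add: sum_distrib_left sum_distrib_right algebra_simps)
  show "integrable lborel (\<lambda>x. (\<Sum>i\<in>A. d i * h i x) * cnj (f x))"
    unfolding eq using assms(2) by (intro Bochner_Integration.integrable_sum Bochner_Integration.integrable_mult_right) auto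
  show "l2_inner (\<lambda>x. \<Sum>i\<in>A. d i * h i x) f = (\<Sum>i\<in>A. d i * l2_inner (h i) f)"
    unfolding l2_inner_def eq using assms(2)
    by (subst Bochner_Integration.integral_sum) (auto intro: Bochner_Integration.integrable_mult_right)
qed

lemma int_diff_left:
  assumes "integrable lborel (\<lambda>x. f1 x * cnj (h x))" "integrable lborel (\<lambda>x. f2 x * cnj (h x))"
  shows "integrable lborel (\<lambda>x. (f1 x - f2 x) * cnj (h x))"
    and "l2_inner (\<lambda>x. f1 x - f2 x) h = l2_inner f1 h - l2_inner f2 h"
proof -
  have eq: "(f1 x - f2 x) * cnj (h x) = f1 x * cnj (h x) - f2 x * cnj (h x)" for x
    by (simp add: algebra_simps)
  show "integrable lborel (\<lambda>x. (f1 x - f2 x) * cnj (h x))"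
    unfolding eq using assms by (rule Bochner_Integration.integrable_diff)
  show "l2_inner (\<lambda>x. f1 x - f2 x) h = l2_inner f1 h - l2_inner f2 h"
    unfolding l2_inner_def eq using assms by (rule Bochner_Integration.integral_diff)
qed

lemma int_diff_right:
  assumes "integrable lborel (\<lambda>x. f x * cnj (h1 x))" "integrable lborel (\<lambda>x. f x * cnj (h2 x))"
  shows "l2_inner f (\<lambda>x. h1 x - h2 x) = l2_inner f h1 - l2_inner f h2"
proof -
  have eq: "f x * cnj (h1 x - h2 x) = f x * cnj (h1 x) - f x * cnj (h2 x)" for x
    by (simp add: algebra_simps)
  show ?thesis
    unfolding l2_inner_def eq using assms by (rule Bochner_Integration.integral_diff)
qed

lemma int_swap:
  assumes "integrable lborel (\<lambda>x. f x * cnj (h x))"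
  shows "integrable lborel (\<lambda>x. h x * cnj (f x))" and "l2_inner h f = cnj (l2_inner f h)"
proof -
  have eq: "h x * cnj (f x) = cnj (f x * cnj (h x))" for x by simp
  show "integrable lborel (\<lambda>x. h x * cnj (f x))" unfolding eq using assms by (rule integrable_cnj)
  show "l2_inner h f = cnj (l2_inner f h)" unfolding l2_inner_def eq by (rule Bochner_Integration.integral_cnj)
qed


lemma hatP_iff: "q \<in> hatP N \<longleftrightarrow> (\<exists>\<psi>. q = phi \<psi> \<and> degree \<psi> \<le> N)"
  unfolding hatP_def phi_def[abs_def] by blast

lemma main_sq:
  fixes k s :: real and N :: nat
  shows "(l2_norm (\<lambda>x. gks k s x - hatPi N (gks k s) x))\<^sup>2
           \<le> sqrt pi * ((k\<^sup>2 + s\<^sup>2) / 2) ^ (N + 1) / fact (N + 1)"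
proof -
  define z where "z = complex_of_real s + \<i> * complex_of_real k"
  define g where "g = gks k s"
  define cr where "cr m = complex_of_real (exp (- s\<^sup>2 / 2)) * (of_real (sqrt pi) * z ^ m * exp (z\<^sup>2 / 4))" for m
  define nu where "nu m = (2::complex) ^ m * fact m * of_real (sqrt pi)" for m
  define a where "a m = cr m / nu m" for m
  define \<psi>P where "\<psi>P = (\<Sum>m\<le>N. smult (a m) (herm m))"
  define P where "P = phi \<psi>P"
  have nu_nz: "nu m \<noteq> 0" for m by (simp add: nu_def)
  have ig: "has_bochner_integral lborel (\<lambda>x. g x * cnj (phi (herm m) x)) (cr m)" for m
    unfolding g_def cr_def z_def by (rule inner_gks_herm)
  have ig_int: "integrable lborel (\<lambda>x. g x * cnj (phi (herm m) x))" for m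
    using ig[of m] has_bochner_integral_iff by blast
  have ig_val: "l2_inner g (phi (herm m)) = cr m" for m
    unfolding l2_inner_def using ig[of m] by (rule has_bochner_integral_integral_eq)
  have P_sum: "P = (\<lambda>x. \<Sum>m\<le>N. a m * phi (herm m) x)"
    unfolding P_def \<psi>P_def by (rule ext) (rule phi_sum)
  have degP: "degree \<psi>P \<le> N"
    unfolding \<psi>P_def by (intro degree_sum_le) (auto intro: order.trans[OF degree_smult_le])
  have P_in: "P \<in> hatP N" unfolding hatP_iff P_def using degP by blast
  have LcP: "Lc (\<psi>P * herm m) = cr m" if "m \<le> N" for m
    unfolding \<psi>P_def using that nu_nz by (simp add: Lc_span_herm a_def nu_def)
  have gP_int: "integrable lborel (\<lambda>x. (g x - P x) * cnj (phi (herm m) x))" for m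
    unfolding P_def by (rule int_diff_left(1)[OF ig_int integrable_phi_herm])
  have orth_h: "l2_inner (\<lambda>x. g x - P x) (phi (herm m)) = 0" if "m \<le> N" for m
  proof -
    have "l2_inner (\<lambda>x. g x - P x) (phi (herm m)) = l2_inner g (phi (herm m)) - l2_inner P (phi (herm m))"
      unfolding P_def by (rule int_diff_left(2)[OF ig_int integrable_phi_herm])
    also have "\<dots> = 0" unfolding ig_val P_def l2_inner_phi_herm LcP[OF that] by simp
    finally show ?thesis .
  qed
  have orth: "\<forall>q\<in>hatP N. l2_inner (\<lambda>x. g x - P x) q = 0"
  proof
    fix q assume "q \<in> hatP N"
    then obtain \<psi> where q: "q = phi \<psi>" and d\<psi>: "degree \<psi> \<le> N" unfolding hatP_iff by blast
    obtain d where d: "\<psi> = (\<Sum>m\<le>N. smult (d m) (herm m))" using herm_span[OF d\<psi>] by blast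
    have q2: "q = (\<lambda>x. \<Sum>m\<le>N. d m * phi (herm m) x)"
      unfolding q d by (rule ext) (rule phi_sum)
    have "l2_inner (\<lambda>x. g x - P x) q = (\<Sum>m\<le>N. cnj (d m) * l2_inner (\<lambda>x. g x - P x) (phi (herm m)))"
      unfolding q2 by (rule int_sum_right(2)) (auto intro: gP_int)
    also have "\<dots> = 0" by (simp add: orth_h)
    finally show "l2_inner (\<lambda>x. g x - P x) q = 0" .
  qed
  have uniq: "p' = P" if p': "p' \<in> hatP N \<and> (\<forall>q\<in>hatP N. l2_inner (\<lambda>x. g x - p' x) q = 0)" for p'
  proof -
    obtain \<psi>' where p'eq: "p' = phi \<psi>'" and d': "degree \<psi>' \<le> N" using p' unfolding hatP_iff by blast
    define \<delta> where "\<delta> = \<psi>' - \<psi>P"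
    have d\<delta>: "degree \<delta> \<le> N" unfolding \<delta>_def using d' degP degree_diff_le by blast
    obtain e where e: "\<delta> = (\<Sum>m\<le>N. smult (e m) (herm m))" using herm_span[OF d\<delta>] by blast
    have "e m = 0" if m: "m \<le> N" for m
    proof -
      have hm: "phi (herm m) \<in> hatP N" unfolding hatP_iff using m by auto
      have "0 = l2_inner (\<lambda>x. g x - p' x) (phi (herm m))" using p' hm by simp
      also have "\<dots> = cr m - Lc (\<psi>' * herm m)"
        unfolding p'eq int_diff_left(2)[OF ig_int integrable_phi_herm] ig_val l2_inner_phi_herm ..
      finally have "Lc (\<psi>' * herm m) = cr m" by simp
      then have "Lc (\<delta> * herm m) = 0" unfolding \<delta>_def by (simp add: left_diff_distrib Lc_diff LcP[OF m])
      then have "e m * nu m = 0" unfolding e Lc_span_herm[OF m] nu_def by simp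
      then show ?thesis using nu_nz by simp
    qed
    then have "\<delta> = 0" unfolding e by simp
    then show ?thesis unfolding p'eq P_def \<delta>_def by simp
  qed
  have hatPi_eq: "hatPi N g = P"
    unfolding hatPi_def
  proof (rule the_equality)
    show "P \<in> hatP N \<and> (\<forall>q\<in>hatP N. l2_inner (\<lambda>x. g x - P x) q = 0)" using P_in orth by blast
  next
    fix p' assume "p' \<in> hatP N \<and> (\<forall>q\<in>hatP N. l2_inner (\<lambda>x. g x - p' x) q = 0)"
    then show "p' = P" by (rule uniq)
  qed
  define A where "A = (k\<^sup>2 + s\<^sup>2) / 2"
  have A0: "0 \<le> A" unfolding A_def by simp
  have gg: "has_bochner_integral lborel (\<lambda>x. g x * cnj (g x)) (of_real (sqrt pi))"
    unfolding g_def by (rule inner_gks_gks)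
  have gg_int: "integrable lborel (\<lambda>x. g x * cnj (g x))" using gg has_bochner_integral_iff by blast
  have gg_val: "l2_inner g g = of_real (sqrt pi)"
    unfolding l2_inner_def using gg by (rule has_bochner_integral_integral_eq)
  have hg_int: "integrable lborel (\<lambda>x. phi (herm m) x * cnj (g x))" for m
    by (rule int_swap(1)[OF ig_int])
  have hg_val: "l2_inner (phi (herm m)) g = cnj (cr m)" for m
    using int_swap(2)[OF ig_int[of m]] ig_val by simp
  have Pg_int: "integrable lborel (\<lambda>x. P x * cnj (g x))"
    unfolding P_sum by (rule int_sum_left(1)) (auto intro: hg_int)
  have Pg_val: "l2_inner P g = (\<Sum>m\<le>N. a m * cnj (cr m))"
    unfolding P_sum by (subst int_sum_left(2)) (auto intro: hg_int simp: hg_val)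
  have gP_int: "integrable lborel (\<lambda>x. g x * cnj (P x))"
    unfolding P_sum by (rule int_sum_right(1)) (auto intro: ig_int)
  have PP_int: "integrable lborel (\<lambda>x. P x * cnj (P x))"
  proof -
    have "integrable lborel (\<lambda>x. P x * cnj (\<Sum>m\<le>N. a m * phi (herm m) x))"
      by (rule int_sum_right(1)) (auto simp: P_def intro: integrable_phi_herm)
    then show ?thesis by (simp add: P_sum)
  qed
  have fg_int: "integrable lborel (\<lambda>x. (g x - P x) * cnj (g x))"
    by (rule int_diff_left(1)[OF gg_int Pg_int])
  have fP_int: "integrable lborel (\<lambda>x. (g x - P x) * cnj (P x))"
    by (rule int_diff_left(1)[OF gP_int PP_int])
  have "l2_inner (\<lambda>x. g x - P x) (\<lambda>x. g x - P x) = l2_inner (\<lambda>x. g x - P x) g - l2_inner (\<lambda>x. g x - P x) P"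
    by (rule int_diff_right[OF fg_int fP_int])
  also have "l2_inner (\<lambda>x. g x - P x) P = 0" using orth P_in by blast
  also have "l2_inner (\<lambda>x. g x - P x) g = l2_inner g g - l2_inner P g"
    by (rule int_diff_left(2)[OF gg_int Pg_int])
  finally have ff: "l2_inner (\<lambda>x. g x - P x) (\<lambda>x. g x - P x) = of_real (sqrt pi) - (\<Sum>m\<le>N. a m * cnj (cr m))"
    by (simp add: gg_val Pg_val)
  have trm: "a m * cnj (cr m) = of_real (sqrt pi * exp (- A) * A ^ m / fact m)" for m
  proof -
    have z2: "(cmod z)\<^sup>2 = s\<^sup>2 + k\<^sup>2" unfolding z_def by (simp add: cmod_def)
    have rz: "Re (z\<^sup>2 / 4) = (s\<^sup>2 - k\<^sup>2) / 4" unfolding z_def by (simp add: power2_eq_square)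
    have rz2: "Re (z\<^sup>2) = s\<^sup>2 - k\<^sup>2" unfolding z_def by (simp add: power2_eq_square)
    have ncr: "cmod (cr m) = exp (- s\<^sup>2 / 2) * sqrt pi * cmod z ^ m * exp ((s\<^sup>2 - k\<^sup>2) / 4)"
      unfolding cr_def by (simp add: norm_mult norm_power rz rz2)
    have "(cmod (cr m))\<^sup>2 = (exp (- s\<^sup>2 / 2))\<^sup>2 * (sqrt pi)\<^sup>2 * ((cmod z)\<^sup>2) ^ m * (exp ((s\<^sup>2 - k\<^sup>2) / 4))\<^sup>2"
      unfolding ncr by (simp add: power_mult_distrib power_mult[symmetric] mult.commute[of m 2])
    also have "\<dots> = exp (- s\<^sup>2) * pi * (s\<^sup>2 + k\<^sup>2) ^ m * exp ((s\<^sup>2 - k\<^sup>2) / 2)"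
      unfolding z2 by (simp add: power2_eq_square flip: exp_add)
    finally have n2: "(cmod (cr m))\<^sup>2 = exp (- s\<^sup>2) * pi * (s\<^sup>2 + k\<^sup>2) ^ m * exp ((s\<^sup>2 - k\<^sup>2) / 2)" .
    have "a m * cnj (cr m) = of_real ((cmod (cr m))\<^sup>2) / nu m"
      unfolding a_def complex_norm_square by simp
    also have "nu m = of_real (2 ^ m * fact m * sqrt pi)" unfolding nu_def by simp
    also have "of_real ((cmod (cr m))\<^sup>2) / complex_of_real (2 ^ m * fact m * sqrt pi) = of_real ((cmod (cr m))\<^sup>2 / (2 ^ m * fact m * sqrt pi))"
      by simp
    also have "(cmod (cr m))\<^sup>2 / (2 ^ m * fact m * sqrt pi) = sqrt pi * exp (- A) * A ^ m / fact m"
    proof -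
      have e1: "exp (- s\<^sup>2) * exp ((s\<^sup>2 - k\<^sup>2) / 2) = exp (- A)" unfolding A_def by (simp flip: exp_add) (simp add: field_simps)
      have e2: "(s\<^sup>2 + k\<^sup>2) ^ m / 2 ^ m = A ^ m" unfolding A_def by (simp add: power_divide add.commute)
      have e3: "pi / sqrt pi = sqrt pi" by (metis real_div_sqrt pi_ge_zero)
      have "(cmod (cr m))\<^sup>2 / (2 ^ m * fact m * sqrt pi) = (exp (- s\<^sup>2) * exp ((s\<^sup>2 - k\<^sup>2) / 2)) * (pi / sqrt pi) * ((s\<^sup>2 + k\<^sup>2) ^ m / 2 ^ m) / fact m"
        unfolding n2 by (simp add: field_simps)
      also have "\<dots> = sqrt pi * exp (- A) * A ^ m / fact m" unfolding e1 e2 e3 by simp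
      finally show ?thesis .
    qed
    finally show ?thesis .
  qed
  have nsq: "(l2_norm (\<lambda>x. g x - P x))\<^sup>2 = (LINT x|lborel. (cmod (g x - P x))\<^sup>2)"
    unfolding l2_norm_def by (simp add: integral_nonneg)
  have "complex_of_real (LINT x|lborel. (cmod (g x - P x))\<^sup>2) = l2_inner (\<lambda>x. g x - P x) (\<lambda>x. g x - P x)"
    unfolding l2_inner_def complex_norm_square[symmetric] by (rule integral_complex_of_real[symmetric])
  also have "\<dots> = of_real (sqrt pi - (\<Sum>m\<le>N. sqrt pi * exp (- A) * A ^ m / fact m))"
    unfolding ff trm by simp
  finally have nval: "(l2_norm (\<lambda>x. g x - P x))\<^sup>2 = sqrt pi - (\<Sum>m\<le>N. sqrt pi * exp (- A) * A ^ m / fact m)"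
    unfolding nsq of_real_eq_iff .
  obtain t where t: "\<bar>t\<bar> \<le> \<bar>A\<bar>" and et: "exp A = (\<Sum>m<Suc N. A ^ m / fact m) + exp t / fact (Suc N) * A ^ Suc N"
    using Maclaurin_exp_le[of A "Suc N"] by blast
  have "sqrt pi - (\<Sum>m\<le>N. sqrt pi * exp (- A) * A ^ m / fact m) = sqrt pi * exp (- A) * (exp A - (\<Sum>m<Suc N. A ^ m / fact m))"
    by (simp add: lessThan_Suc_atMost sum_distrib_left right_diff_distrib exp_minus field_simps)
  also have "\<dots> = sqrt pi * (exp (- A) * exp t) * A ^ Suc N / fact (Suc N)"
    unfolding et by simp
  also have "\<dots> \<le> sqrt pi * 1 * A ^ Suc N / fact (Suc N)"
  proof -
    have "exp (- A) * exp t \<le> 1" using t A0 by (simp flip: exp_add)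
    then show ?thesis using A0 by (intro divide_right_mono mult_right_mono mult_left_mono) auto
  qed
  finally show ?thesis unfolding g_def[symmetric] hatPi_eq nval A_def by (simp add: add.commute)
qed


theorem lemma2p6:
  shows "\<exists>C>0. \<forall>(k::real) (s::real) (N::nat).
           l2_norm (\<lambda>x. gks k s x - hatPi N (gks k s) x)
             \<le> C / sqrt (fact (N + 1)) * ((k^2 + s^2) / 2) powr (real (N + 1) / 2)"
proof (intro exI[of _ 2] conjI allI)
  fix k s :: real and N :: nat
  define L where "L = l2_norm (\<lambda>x. gks k s x - hatPi N (gks k s) x)"
  define A where "A = (k^2 + s^2) / 2"
  define F :: real where "F = fact (N + 1)"
  have A0: "0 \<le> A" unfolding A_def by simp
  have F0: "0 < F" unfolding F_def by simp
  have L0: "0 \<le> L" unfolding L_def l2_norm_def by simp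
  have Lsq: "L\<^sup>2 \<le> sqrt pi * A ^ (N + 1) / F"
    unfolding L_def A_def F_def using main_sq[of k s N] by simp
  have pw: "(A powr (real (N + 1) / 2))\<^sup>2 = A ^ (N + 1)"
  proof (cases "A = 0")
    case True then show ?thesis by simp
  next
    case False
    then have "0 < A" using A0 by simp
    have "(A powr (real (N + 1) / 2))\<^sup>2 = A powr (real (N + 1) / 2 + real (N + 1) / 2)"
      by (simp only: power2_eq_square powr_add[symmetric])
    also have "\<dots> = A powr (real (N + 1))" by (simp only: field_sum_of_halves)
    also have "\<dots> = A ^ (N + 1)" using \<open>0 < A\<close> by (rule powr_realpow)
    finally show ?thesis .
  qed
  define R where "R = 2 / sqrt F * A powr (real (N + 1) / 2)"
  have R0: "0 \<le> R" unfolding R_def using F0 by simp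
  have "R\<^sup>2 = 4 / F * A ^ (N + 1)"
    unfolding R_def power_mult_distrib pw using F0 by (simp add: power_divide)
  moreover have "sqrt pi * A ^ (N + 1) / F \<le> 4 / F * A ^ (N + 1)"
  proof -
    have "sqrt pi \<le> 4" using pi_less_4 real_sqrt_le_iff[of pi 16] by (simp add: real_sqrt_le_iff) 
    moreover have "0 \<le> A ^ (N + 1)" using A0 by simp
    ultimately have "sqrt pi * A ^ (N + 1) \<le> 4 * A ^ (N + 1)" by (rule mult_right_mono)
    then show ?thesis using F0 by (simp add: divide_right_mono)
  qed
  ultimately have "L\<^sup>2 \<le> R\<^sup>2" using Lsq by linarith
  then have "L \<le> R" using R0 by (rule power2_le_imp_le)
  then show "L \<le> 2 / sqrt (fact (N + 1)) * ((k^2 + s^2) / 2) powr (real (N + 1) / 2)"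
    unfolding R_def F_def A_def .
qed (simp)

end
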